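(* Let $m\ge3$ be odd and $n\ge2$. The set $\mathrm{SPSD}_{m,n}$ is a closed convex cone. Moreover, if $\mathcal{A},\mathcal{B}\in\mathrm{SPSD}_{3,n}$, then their Hadamard product $\mathcal{C}=\mathcal{A}\circ\mathcal{B}$ (entrywise product, $c_{ijk}=a_{ijk}b_{ijk}$) belongs to $\mathrm{SPSD}_{3,n}$; and if $\mathcal{A},\mathcal{B}\in\mathrm{SPD}_{3,n}$, then $\mathcal{C}\in\mathrm{SPD}_{3,n}$.
   Context: For a symmetric $m$th order $n$-dimensional real tensor $\mathcal{A}$ and $\mathbf{x}\in\mathbb{R}^n$, $\mathcal{A}\mathbf{x}^{m-1}$ is the vector with $i$th component $\sum_{i_2,\dots,i_m}a_{ii_2\dots i_m}x_{i_2}\cdots x_{i_m}$. For odd $m$, $\mathrm{SPSD}_{m,n}$ is the set of real symmetric $m$th order $n$-dimensional tensors $\mathcal{A}$ with $\mathcal{A}\mathbf{x}^{m-1}\ge\mathbf{0}$ componentwise for all $\mathbf{x}\in\mathbb{R}^n$ (strongly positive semi-definite tensors), and $\mathrm{SPD}_{m,n}$ is the set of those with $\mathcal{A}\mathbf{x}^{m-1}>\mathbf{0}$ componentwise for all nonzero $\mathbf{x}$ (strongly positive definite tensors). *)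

theory Defs
  imports "HOL-Analysis.Analysis"
begin

text \<open>A real tensor of order m and dimension n is represented as a vector indexed by
  index maps g :: 'n ^ ('m option): the n-element type 'n is the index range {1..n}
  and the positions are 'm option, i.e. CARD('m) + 1 = m positions. Position None is the
  first index i, positions Some p are the remaining m - 1 indices i_2 .. i_m.\<close>

type_synonym ('n, 'm) tensor = "real ^ ('n ^ ('m option))"

definition sym_tensor :: "('n::finite, 'm::finite) tensor \<Rightarrow> bool" where
  "sym_tensor A \<longleftrightarrow>
     (\<forall>\<sigma>. \<sigma> permutes (UNIV :: 'm option set) \<longrightarrow>
        (\<forall>g. A $ g = A $ (\<chi> p. g $ (\<sigma> p))))"

definition tensor_apply :: "('n::finite, 'm::finite) tensor \<Rightarrow> real ^ 'n \<Rightarrow> real ^ 'n" where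
  "tensor_apply A x = (\<chi> i. \<Sum>g \<in> {g. g $ None = i}. A $ g * (\<Prod>p\<in>UNIV. x $ (g $ Some p)))"

definition SPSD :: "('n::finite, 'm::finite) tensor set" where
  "SPSD = {A. sym_tensor A \<and> (\<forall>x i. tensor_apply A x $ i \<ge> 0)}"

definition SPD :: "('n::finite, 'm::finite) tensor set" where
  "SPD = {A. sym_tensor A \<and> (\<forall>x i. x \<noteq> 0 \<longrightarrow> tensor_apply A x $ i > 0)}"

definition hadamard :: "('n::finite, 'm::finite) tensor \<Rightarrow> ('n, 'm) tensor \<Rightarrow> ('n, 'm) tensor" where
  "hadamard A B = (\<chi> g. A $ g * B $ g)"

end

theory Submission
  imports Defs
begin


definition qf :: "('n::finite \<Rightarrow> 'n \<Rightarrow> real) \<Rightarrow> ('n \<Rightarrow> real) \<Rightarrow> real" where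
  "qf B y = (\<Sum>j\<in>UNIV. \<Sum>k\<in>UNIV. B j k * y j * y k)"

lemma ifm: "(if P then x else 0) * (a::real) = (if P then x * a else 0)" by simp

lemma qf2: "qf B (\<lambda>j. a * (if j = k then 1 else 0) + b * (if j = s then 1 else 0))
   = a*a*B k k + a*b*(B k s + B s k) + b*b*B s s"
  unfolding qf_def by (simp add: ring_distribs sum.distrib sum_distrib_left[symmetric] mult.assoc[symmetric] if_distrib[of "\<lambda>x. _ * x"] ifm cong: if_cong)

lemma qf_diag: "qf B (\<lambda>j. if j = k then 1 else 0) = B k k"
  using qf2[of B 1 k 0 k] by simp

lemma psd_diag0:
  fixes B :: "'n::finite \<Rightarrow> 'n \<Rightarrow> real"
  assumes psd: "\<forall>y. qf B y \<ge> 0" and sym: "\<forall>j k. B j k = B k j" and z: "B s s = 0"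
  shows "B s k = 0"
proof -
  have Q: "B k k * t * t + 2 * B s k * t \<ge> 0" for t
  proof -
    have "qf B (\<lambda>j. t * (if j = k then 1 else 0) + 1 * (if j = s then 1 else 0)) = B k k * t * t + 2 * B s k * t"
      using qf2[of B t k 1 s] z sym[rule_format, of k s] by (simp add: algebra_simps)
    then show ?thesis using psd[rule_format, of "\<lambda>j. t * (if j = k then 1 else 0) + 1 * (if j = s then 1 else 0)"] by simp
  qed
  show ?thesis
  proof (rule ccontr)
    assume ne: "B s k \<noteq> 0"
    define t where "t = - B s k / (B k k + 1)"
    have bkk: "B k k \<ge> 0" using psd[rule_format, of "\<lambda>j. if j = k then 1 else 0"] qf_diag[of B k] by simp
    have "B k k * t * t + 2 * B s k * t < 0"
    proof -
      have e1: "B k k * t * t + 2 * B s k * t = t * (B k k * t + 2 * B s k)" by algebra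
      have e2: "B k k * t + 2 * B s k = B s k * (2 - B k k / (B k k + 1))"
        using bkk unfolding t_def by (simp add: field_simps)
      have e3: "2 - B k k / (B k k + 1) > 0" using bkk by (simp add: field_simps)
      have e4: "t * B s k < 0"
      proof -
        have "t * B s k = - ((B s k)^2 / (B k k + 1))" by (simp add: t_def power2_eq_square)
        moreover have "(B s k)^2 > 0" using ne by simp
        ultimately show ?thesis using bkk by simp
      qed
      have "(t * B s k) * (2 - B k k / (B k k + 1)) < 0"
        by (rule mult_neg_pos[OF e4 e3])
      then show ?thesis unfolding e1 e2 by (simp add: mult.assoc)
    qed
    then show False using Q[of t] by linarith
  qed
qed

lemma qf_upd:
  assumes "\<forall>k. B s k = 0 \<and> B k s = 0"
  shows "qf B (y(s := c)) = qf B y"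
  unfolding qf_def using assms by (intro sum.cong refl) auto

lemma qf_rank1:
  "qf (\<lambda>j k. B j k - B s j * B s k / p) y = qf B y - (\<Sum>j\<in>UNIV. B s j * y j)^2 / p"
proof -
  have "(\<Sum>j\<in>UNIV. B s j * y j)^2 = (\<Sum>j\<in>UNIV. \<Sum>k\<in>UNIV. (B s j * y j) * (B s k * y k))"
    by (simp add: power2_eq_square sum_product)
  note sq = this
  show ?thesis
  proof -
    have "qf (\<lambda>j k. B j k - B s j * B s k / p) y = (\<Sum>j\<in>UNIV. \<Sum>k\<in>UNIV. B j k * y j * y k - (B s j * y j) * (B s k * y k) / p)"
      unfolding qf_def by (intro sum.cong refl) (simp add: algebra_simps)
    also have "\<dots> = qf B y - (\<Sum>j\<in>UNIV. \<Sum>k\<in>UNIV. (B s j * y j) * (B s k * y k)) / p"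
      unfolding qf_def by (simp add: sum_subtractf sum_divide_distrib)
    finally show ?thesis using sq by simp
  qed
qed

definition had2 :: "('n \<Rightarrow> 'n \<Rightarrow> real) \<Rightarrow> ('n \<Rightarrow> 'n \<Rightarrow> real) \<Rightarrow> ('n \<Rightarrow> 'n \<Rightarrow> real)" where
  "had2 A B = (\<lambda>j k. A j k * B j k)"

lemma schur_induct:
  fixes A :: "'n::finite \<Rightarrow> 'n \<Rightarrow> real" and S :: "'n set"
  assumes psdA: "\<forall>y. qf A y \<ge> 0" and fin: "finite S"
  shows "\<forall>B. (\<forall>j k. B j k = B k j) \<longrightarrow> (\<forall>y. qf B y \<ge> 0) \<longrightarrow> (\<forall>j k. j \<notin> S \<or> k \<notin> S \<longrightarrow> B j k = 0) \<longrightarrow>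
     qf (had2 A B) x \<ge> 0 \<and> ((\<forall>y. y \<noteq> (\<lambda>_. 0) \<longrightarrow> qf A y > 0) \<longrightarrow> qf (had2 A B) x = 0 \<longrightarrow> (\<forall>j k. x j * B j k = 0))"
  using fin
proof (induction S rule: finite_induct)
  case empty
  show ?case
  proof (intro allI impI)
    fix B :: "'n \<Rightarrow> 'n \<Rightarrow> real"
    assume "\<forall>j k. j \<notin> {} \<or> k \<notin> {} \<longrightarrow> B j k = 0"
    then have "B = (\<lambda>j k. 0)" by auto
    then show "qf (had2 A B) x \<ge> 0 \<and> ((\<forall>y. y \<noteq> (\<lambda>_. 0) \<longrightarrow> qf A y > 0) \<longrightarrow> qf (had2 A B) x = 0 \<longrightarrow> (\<forall>j k. x j * B j k = 0))"
      by (simp add: qf_def had2_def)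
  qed
next
  case (insert s S)
  show ?case
  proof (intro allI impI)
    fix B :: "'n \<Rightarrow> 'n \<Rightarrow> real"
    assume sym: "\<forall>j k. B j k = B k j" and psd: "\<forall>y. qf B y \<ge> 0"
      and supp: "\<forall>j k. j \<notin> insert s S \<or> k \<notin> insert s S \<longrightarrow> B j k = 0"
    show "qf (had2 A B) x \<ge> 0 \<and> ((\<forall>y. y \<noteq> (\<lambda>_. 0) \<longrightarrow> qf A y > 0) \<longrightarrow> qf (had2 A B) x = 0 \<longrightarrow> (\<forall>j k. x j * B j k = 0))"
    proof (cases "B s s = 0")
      case True
      have row: "B s k = 0" for k using psd_diag0[OF psd sym True] .
      have "\<forall>j k. j \<notin> S \<or> k \<notin> S \<longrightarrow> B j k = 0"
      proof (intro allI impI)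
        fix j k assume "j \<notin> S \<or> k \<notin> S"
        then show "B j k = 0" using supp row sym by (metis insertE)
      qed
      then show ?thesis using insert.IH sym psd by blast
    next
      case False
      define p where "p = B s s"
      have "p \<ge> 0" unfolding p_def using psd[rule_format, of "\<lambda>j. if j = s then 1 else 0"] qf_diag[of B s] by simp
      with False have pp: "p > 0" unfolding p_def by simp
      define B' where "B' = (\<lambda>j k. B j k - B s j * B s k / p)"
      have sym': "\<forall>j k. B' j k = B' k j" unfolding B'_def using sym by (simp add: mult.commute)
      have rows': "\<forall>k. B' s k = 0 \<and> B' k s = 0" unfolding B'_def p_def using False sym by simp
      have supp': "\<forall>j k. j \<notin> S \<or> k \<notin> S \<longrightarrow> B' j k = 0"
      proof (intro allI impI)
        fix j k assume jk: "j \<notin> S \<or> k \<notin> S"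
        show "B' j k = 0"
        proof (cases "j = s \<or> k = s")
          case True then show ?thesis using rows' by auto
        next
          case False
          then have "j \<notin> insert s S \<or> k \<notin> insert s S" using jk by auto
          then have "B j k = 0" "B s j = 0 \<or> B s k = 0" using supp sym by metis+
          then show ?thesis unfolding B'_def by auto
        qed
      qed
      have psd': "\<forall>y. qf B' y \<ge> 0"
      proof
        fix y :: "'n \<Rightarrow> real"
        define c where "c = - (\<Sum>j\<in>UNIV - {s}. B s j * y j) / p"
        define y' where "y' = y(s := c)"
        have "(\<Sum>j\<in>UNIV. B s j * y' j) = B s s * c + (\<Sum>j\<in>UNIV - {s}. B s j * y j)"
          unfolding y'_def by (subst sum.remove[of UNIV s]) (auto intro!: sum.cong)
        also have "\<dots> = 0" unfolding c_def using pp by (simp add: p_def)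
        finally have z: "(\<Sum>j\<in>UNIV. B s j * y' j) = 0" .
        have "qf B' y = qf B' y'" unfolding y'_def using qf_upd[OF rows'] by simp
        also have "\<dots> = qf B y'" unfolding B'_def qf_rank1 z by simp
        finally show "qf B' y \<ge> 0" using psd by simp
      qed
      have IH: "qf (had2 A B') x \<ge> 0 \<and> ((\<forall>y. y \<noteq> (\<lambda>_. 0) \<longrightarrow> qf A y > 0) \<longrightarrow> qf (had2 A B') x = 0 \<longrightarrow> (\<forall>j k. x j * B' j k = 0))"
        using insert.IH sym' psd' supp' by blast
      define z where "z = (\<lambda>j. x j * B s j)"
      have dec: "qf (had2 A B) x = qf A z / p + qf (had2 A B') x"
      proof -
        have "qf (had2 A B) x = (\<Sum>j\<in>UNIV. \<Sum>k\<in>UNIV. A j k * z j * z k / p + had2 A B' j k * x j * x k)"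
          unfolding qf_def
        proof (intro sum.cong refl)
          fix j k
          have "B j k = B' j k + B s j * B s k / p" unfolding B'_def by simp
          then show "had2 A B j k * x j * x k = A j k * z j * z k / p + had2 A B' j k * x j * x k"
            unfolding had2_def z_def by (simp add: algebra_simps add_divide_distrib)
        qed
        also have "\<dots> = qf A z / p + qf (had2 A B') x"
          unfolding qf_def by (simp add: sum.distrib sum_divide_distrib)
        finally show ?thesis .
      qed
      have qA: "qf A z / p \<ge> 0" using psdA pp by simp
      show ?thesis
      proof
        show "qf (had2 A B) x \<ge> 0" using dec qA IH by simp
      next
        show "(\<forall>y. y \<noteq> (\<lambda>_. 0) \<longrightarrow> qf A y > 0) \<longrightarrow> qf (had2 A B) x = 0 \<longrightarrow> (\<forall>j k. x j * B j k = 0)"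
        proof (intro impI allI)
          fix j k
          assume pdA: "\<forall>y. y \<noteq> (\<lambda>_. 0) \<longrightarrow> qf A y > 0" and q0: "qf (had2 A B) x = 0"
          have "qf A z / p = 0" "qf (had2 A B') x = 0" using dec qA IH q0 by linarith+
          then have "qf A z = 0" using pp by simp
          then have "z = (\<lambda>_. 0)" using pdA by force
          then have zj: "x j * B s j = 0" unfolding z_def by metis
          have "x j * B' j k = 0" using IH pdA \<open>qf (had2 A B') x = 0\<close> by blast
          moreover have "x j * B j k = x j * B' j k + (x j * B s j) * B s k / p" unfolding B'_def
            by (simp add: algebra_simps)
          ultimately show "x j * B j k = 0" using zj by (metis add_0 div_0 mult_zero_left)
        qed
      qed
    qed
  qed
qed

lemma schur_psd:
  fixes A B :: "'n::finite \<Rightarrow> 'n \<Rightarrow> real"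
  assumes "\<forall>y. qf A y \<ge> 0" "\<forall>j k. B j k = B k j" "\<forall>y. qf B y \<ge> 0"
  shows "qf (had2 A B) x \<ge> 0"
  using schur_induct[OF assms(1) finite[of UNIV], of x] assms(2,3) by blast

lemma schur_pd:
  fixes A B :: "'n::finite \<Rightarrow> 'n \<Rightarrow> real"
  assumes pdA: "\<forall>y. y \<noteq> (\<lambda>_. 0) \<longrightarrow> qf A y > 0" and sym: "\<forall>j k. B j k = B k j"
    and pdB: "\<forall>y. y \<noteq> (\<lambda>_. 0) \<longrightarrow> qf B y > 0" and x: "x \<noteq> (\<lambda>_. 0)"
  shows "qf (had2 A B) x > 0"
proof -
  have q0: "qf C (\<lambda>_. 0) = 0" for C :: "'n \<Rightarrow> 'n \<Rightarrow> real" by (simp add: qf_def)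
  have psdA: "\<forall>y. qf A y \<ge> 0" using pdA q0 by (metis order_less_imp_le order_refl)
  have psdB: "\<forall>y. qf B y \<ge> 0" using pdB q0 by (metis order_less_imp_le order_refl)
  have R: "qf (had2 A B) x \<ge> 0 \<and> (qf (had2 A B) x = 0 \<longrightarrow> (\<forall>j k. x j * B j k = 0))"
    using schur_induct[OF psdA finite[of UNIV], of x] sym psdB pdA by blast
  have "qf (had2 A B) x \<noteq> 0"
  proof
    assume "qf (had2 A B) x = 0"
    then have h: "x j * B j j = 0" for j using R by blast
    have "B j j > 0" for j
    proof -
      have "(\<lambda>i. if i = j then 1 else 0 :: real) \<noteq> (\<lambda>_. 0)" by (metis one_neq_zero)
      then show ?thesis using pdB qf_diag[of B j] by metis
    qed
    then have "x j = 0" for j using h[of j] by (metis less_irrefl mult_eq_0_iff)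
    then show False using x by auto
  qed
  then show ?thesis using R by linarith
qed



definition mk :: "'n::finite \<Rightarrow> 'n \<Rightarrow> 'n \<Rightarrow> 'n ^ (2 option)" where
  "mk i j k = (\<chi> p. case p of None \<Rightarrow> i | Some q \<Rightarrow> if q = 1 then j else k)"

definition slice :: "('n::finite, 2) tensor \<Rightarrow> 'n \<Rightarrow> 'n \<Rightarrow> 'n \<Rightarrow> real" where
  "slice A i = (\<lambda>j k. A $ mk i j k)"

lemma mk_simps [simp]: "mk i j k $ None = i" "mk i j k $ Some 1 = j" "mk i j k $ Some 2 = k"
  by (simp_all add: mk_def)

lemma mk_inj: "mk i j k = mk i' j' k' \<longleftrightarrow> i = i' \<and> j = j' \<and> k = k'"
  by (metis mk_simps)

lemma mk_surj: "g $ None = i \<Longrightarrow> g = mk i (g $ Some 1) (g $ Some 2)"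
  unfolding vec_eq_iff
proof
  fix p :: "2 option" assume "g $ None = i"
  then show "g $ p = mk i (g $ Some 1) (g $ Some 2) $ p"
  proof (cases p)
    case None then show ?thesis using \<open>g $ None = i\<close> by (simp add: mk_def)
  next
    case (Some q)
    then consider "p = Some 1" | "p = Some 2" using exhaust_2[of q] by blast
    then show ?thesis by cases simp_all
  qed
qed

lemma ta_slice:
  fixes A :: "('n::finite, 2) tensor"
  shows "tensor_apply A x $ i = qf (slice A i) (\<lambda>j. x $ j)"
proof -
  have set: "{g. g $ None = i} = (\<lambda>(j, k). mk i j k) ` UNIV"
  proof (intro set_eqI iffI)
    fix g :: "'n ^ 2 option" assume "g \<in> {g. g $ None = i}"
    then have "g = mk i (g $ Some 1) (g $ Some 2)" using mk_surj by blast
    then show "g \<in> (\<lambda>(j, k). mk i j k) ` UNIV" by (metis (no_types, lifting) case_prod_conv rangeI)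
  next
    fix g :: "'n ^ 2 option" assume "g \<in> (\<lambda>(j, k). mk i j k) ` UNIV"
    then show "g \<in> {g. g $ None = i}" by auto
  qed
  have inj: "inj_on (\<lambda>(j, k). mk i j k) UNIV"
    by (auto simp: inj_on_def mk_inj)
  have "tensor_apply A x $ i = (\<Sum>g\<in>{g. g $ None = i}. A $ g * (x $ (g $ Some 1) * x $ (g $ Some 2)))"
    by (simp add: tensor_apply_def UNIV_2)
  also have "\<dots> = (\<Sum>(j, k)\<in>UNIV. A $ mk i j k * (x $ j * x $ k))"
    unfolding set by (subst sum.reindex[OF inj]) (simp add: case_prod_beta)
  also have "\<dots> = qf (slice A i) (\<lambda>j. x $ j)"
    unfolding qf_def slice_def UNIV_Times_UNIV[symmetric] sum.cartesian_product[symmetric]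
    by (simp add: mult.assoc)
  finally show ?thesis .
qed

lemma slice_sym:
  assumes "sym_tensor A"
  shows "\<forall>j k. slice A i j k = slice A i k j"
proof (intro allI)
  fix j k
  let ?s = "Transposition.transpose (Some (1::2)) (Some 2)"
  have "?s permutes UNIV" by (rule permutes_swap_id) auto
  then have "A $ mk i j k = A $ (\<chi> p. mk i j k $ (?s p))" using assms unfolding sym_tensor_def by blast
  also have "(\<chi> p. mk i j k $ (?s p)) = mk i k j"
    unfolding vec_eq_iff
  proof
    fix p :: "2 option"
    show "(\<chi> p. mk i j k $ (?s p)) $ p = mk i k j $ p"
    proof (cases p)
      case None then show ?thesis by (simp add: mk_def)
    next
      case (Some q)
      then consider "p = Some 1" | "p = Some 2" using exhaust_2[of q] by blast
      then show ?thesis by cases (simp_all add: mk_def)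
    qed
  qed
  finally show "slice A i j k = slice A i k j" by (simp add: slice_def)
qed

lemma slice_had: "slice (hadamard A B) i = had2 (slice A i) (slice B i)"
  by (simp add: slice_def hadamard_def had2_def)

lemma sym_had:
  fixes A B :: "('n::finite, 2) tensor"
  shows "sym_tensor A \<Longrightarrow> sym_tensor B \<Longrightarrow> sym_tensor (hadamard A B)"
  unfolding sym_tensor_def
proof (intro allI impI)
  fix \<sigma> :: "2 option \<Rightarrow> 2 option" and g :: "'n ^ 2 option"
  assume a: "\<forall>\<sigma>. \<sigma> permutes UNIV \<longrightarrow> (\<forall>g. A $ g = A $ (\<chi> p. g $ \<sigma> p))"
    and b: "\<forall>\<sigma>. \<sigma> permutes UNIV \<longrightarrow> (\<forall>g. B $ g = B $ (\<chi> p. g $ \<sigma> p))"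
    and p: "\<sigma> permutes UNIV"
  have h: "hadamard A B $ h = A $ h * B $ h" for h by (simp add: hadamard_def)
  show "hadamard A B $ g = hadamard A B $ (\<chi> p. g $ \<sigma> p)"
    unfolding h using a[rule_format, OF p, of g] b[rule_format, OF p, of g] by simp
qed

lemma vec_lambda_nth: "(\<lambda>j. (\<chi> j. y j) $ j) = y" by simp

lemma had_SPSD:
  fixes A B :: "('n::finite, 2) tensor"
  assumes "A \<in> SPSD" "B \<in> SPSD"
  shows "hadamard A B \<in> SPSD"
proof -
  have psd: "\<forall>y. qf (slice C i) y \<ge> 0" if "C \<in> SPSD" for C :: "('n, 2) tensor" and i
  proof
    fix y :: "'n \<Rightarrow> real"
    have "tensor_apply C (\<chi> j. y j) $ i \<ge> 0" using that by (simp add: SPSD_def)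
    then show "qf (slice C i) y \<ge> 0" by (simp add: ta_slice)
  qed
  show ?thesis
    unfolding SPSD_def
  proof (intro CollectI conjI allI)
    show "sym_tensor (hadamard A B)" using assms by (intro sym_had) (auto simp: SPSD_def)
    fix x i
    show "tensor_apply (hadamard A B) x $ i \<ge> 0"
      unfolding ta_slice slice_had
      by (rule schur_psd[OF psd[OF assms(1)] slice_sym psd[OF assms(2)]]) (use assms(2) in \<open>simp add: SPSD_def\<close>)
  qed
qed

lemma had_SPD:
  fixes A B :: "('n::finite, 2) tensor"
  assumes "A \<in> SPD" "B \<in> SPD"
  shows "hadamard A B \<in> SPD"
proof -
  have pd: "\<forall>y. y \<noteq> (\<lambda>_. 0) \<longrightarrow> qf (slice C i) y > 0" if "C \<in> SPD" for C :: "('n, 2) tensor" and i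
  proof (intro allI impI)
    fix y :: "'n \<Rightarrow> real" assume "y \<noteq> (\<lambda>_. 0)"
    then have "(\<chi> j. y j) \<noteq> 0" by (auto simp: vec_eq_iff)
    then have "tensor_apply C (\<chi> j. y j) $ i > 0" using that by (simp add: SPD_def)
    then show "qf (slice C i) y > 0" by (simp add: ta_slice)
  qed
  show ?thesis
    unfolding SPD_def
  proof (intro CollectI conjI allI impI)
    show "sym_tensor (hadamard A B)" using assms by (intro sym_had) (auto simp: SPD_def)
    fix x :: "real ^ 'n" and i assume "x \<noteq> 0"
    then have x: "(\<lambda>j. x $ j) \<noteq> (\<lambda>_. 0)" by (auto simp: vec_eq_iff)
    have sB: "sym_tensor B" using assms(2) by (simp add: SPD_def)
    show "tensor_apply (hadamard A B) x $ i > 0"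
      unfolding ta_slice slice_had
      by (rule schur_pd[OF pd[OF assms(1)] slice_sym[OF sB] pd[OF assms(2)] x])
  qed
qed



lemma ta_cont: "continuous_on UNIV (\<lambda>A::('n::finite,'m::finite) tensor. tensor_apply A x $ i)"
  unfolding tensor_apply_def by (simp add: continuous_intros)

lemma nth_cont: "continuous_on UNIV (\<lambda>A::real^'a::finite. A $ g)"
  by (simp add: continuous_intros)

lemma SPSD_closed: "closed (SPSD :: ('n::finite, 'm::finite) tensor set)"
proof -
  have "(SPSD :: ('n, 'm) tensor set) = (\<Inter>\<sigma>\<in>{\<sigma>. \<sigma> permutes UNIV}. \<Inter>g. {A. A$g = A$(\<chi> p. g$\<sigma> p)}) \<inter> (\<Inter>x. \<Inter>i. {A. 0 \<le> tensor_apply A x $ i})"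
    by (auto simp: SPSD_def sym_tensor_def)
  also have "closed \<dots>"
    by (intro closed_Int closed_INT ballI allI closed_Collect_eq closed_Collect_le continuous_on_const ta_cont nth_cont)
  finally show ?thesis .
qed

lemma ta_add: "tensor_apply (A + B) x = tensor_apply A x + tensor_apply B x"
  unfolding tensor_apply_def by (simp add: vec_eq_iff algebra_simps sum.distrib)

lemma ta_scale: "tensor_apply (c *\<^sub>R A) x = c *\<^sub>R tensor_apply A x"
  unfolding tensor_apply_def by (simp add: vec_eq_iff sum_distrib_left mult.assoc)

lemma ta_zero: "tensor_apply 0 x = 0"
  unfolding tensor_apply_def by (simp add: vec_eq_iff)

lemma SPSD_cone: "convex_cone (SPSD :: ('n::finite, 'm::finite) tensor set)"
  unfolding convex_cone_iff
proof (intro conjI ballI allI impI)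
  show "0 \<in> (SPSD :: ('n, 'm) tensor set)" by (simp add: SPSD_def sym_tensor_def ta_zero)
next
  fix A B :: "('n, 'm) tensor" assume a: "A \<in> SPSD" and b: "B \<in> SPSD"
  show "A + B \<in> SPSD" unfolding SPSD_def
  proof (intro CollectI conjI allI)
    show "sym_tensor (A + B)" unfolding sym_tensor_def
    proof (intro allI impI)
      fix \<sigma> :: "'m option \<Rightarrow> 'm option" and g :: "'n ^ 'm option"
      assume p: "\<sigma> permutes UNIV"
      have "A $ g = A $ (\<chi> p. g $ \<sigma> p)" "B $ g = B $ (\<chi> p. g $ \<sigma> p)"
        using a b p unfolding SPSD_def sym_tensor_def by blast+
      then show "(A + B) $ g = (A + B) $ (\<chi> p. g $ \<sigma> p)" by simp
    qed
    fix x i show "tensor_apply (A + B) x $ i \<ge> 0"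
      using a b unfolding SPSD_def ta_add by (simp add: add_nonneg_nonneg)
  qed
next
  fix A :: "('n, 'm) tensor" and c :: real assume a: "A \<in> SPSD" and c: "0 \<le> c"
  show "c *\<^sub>R A \<in> SPSD" unfolding SPSD_def
  proof (intro CollectI conjI allI)
    show "sym_tensor (c *\<^sub>R A)" unfolding sym_tensor_def
    proof (intro allI impI)
      fix \<sigma> :: "'m option \<Rightarrow> 'm option" and g :: "'n ^ 'm option"
      assume p: "\<sigma> permutes UNIV"
      have "A $ g = A $ (\<chi> p. g $ \<sigma> p)"
        using a p unfolding SPSD_def sym_tensor_def by blast
      then show "(c *\<^sub>R A) $ g = (c *\<^sub>R A) $ (\<chi> p. g $ \<sigma> p)" by simp
    qed
    fix x i show "tensor_apply (c *\<^sub>R A) x $ i \<ge> 0"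
      using a c unfolding SPSD_def ta_scale by simp
  qed
qed


theorem theorem3p9:
  assumes "even CARD('m::finite)" and "CARD('m) \<ge> 2"
    and "CARD('n::finite) \<ge> 2"
  shows "closed (SPSD :: ('n, 'm) tensor set) \<and> convex_cone (SPSD :: ('n, 'm) tensor set)
    \<and> (\<forall>A B :: ('n, 2) tensor. A \<in> SPSD \<longrightarrow> B \<in> SPSD \<longrightarrow> hadamard A B \<in> SPSD)
    \<and> (\<forall>A B :: ('n, 2) tensor. A \<in> SPD \<longrightarrow> B \<in> SPD \<longrightarrow> hadamard A B \<in> SPD)"
  using SPSD_closed SPSD_cone had_SPSD had_SPD by blast

end
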